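(* Let $q'>0$, $e'\in(0,1)$, $q_{\max}>0$. There is no $(q,\omega')\in\mathcal D_6$ such that the orbits are linked for every $(e,\omega)\in\mathcal D_5$.
   Context: For $q>0$, $e\in[0,1]$ and angles $\omega,\omega'$, define $r_{\pm}=\frac{q(1+e)}{1\pm e\cos\omega}$, $r'_{\pm}=\frac{q'(1+e')}{1\pm e'\cos\omega'}$ (extended-real values allowed), $d^+=r'_+-r_+$, $d^-=r'_--r_-$. Linked orbits: $d^+d^-<0$. $\mathcal D_5=\{(e,\omega):0\le e\le1,\ 0\le\omega\le\pi\}$, $\mathcal D_6=\{(q,\omega'):0<q\le q_{\max},\ 0\le\omega'\le\pi/2\}$. *)

theory Defs
  imports Complex_Main "HOL-Library.Extended_Real"
begin

text \<open>Apsidal distances as extended reals: the value is +infinity exactly when the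
  denominator vanishes (e = 1 and cos w = -1 resp. +1); the numerator is positive.\<close>
definition r_plus :: "real \<Rightarrow> real \<Rightarrow> real \<Rightarrow> ereal" where
  "r_plus q e w = (if 1 + e * cos w = 0 then \<infinity> else ereal (q * (1 + e) / (1 + e * cos w)))"

definition r_minus :: "real \<Rightarrow> real \<Rightarrow> real \<Rightarrow> ereal" where
  "r_minus q e w = (if 1 - e * cos w = 0 then \<infinity> else ereal (q * (1 + e) / (1 - e * cos w)))"

definition d_plus :: "real \<Rightarrow> real \<Rightarrow> real \<Rightarrow> real \<Rightarrow> real \<Rightarrow> real \<Rightarrow> ereal" where
  "d_plus q e w q' e' w' = r_plus q' e' w' - r_plus q e w"

definition d_minus :: "real \<Rightarrow> real \<Rightarrow> real \<Rightarrow> real \<Rightarrow> real \<Rightarrow> real \<Rightarrow> ereal" where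
  "d_minus q e w q' e' w' = r_minus q' e' w' - r_minus q e w"

definition linked :: "real \<Rightarrow> real \<Rightarrow> real \<Rightarrow> real \<Rightarrow> real \<Rightarrow> real \<Rightarrow> bool" where
  "linked q e w q' e' w' \<longleftrightarrow> d_plus q e w q' e' w' * d_minus q e w q' e' w' < 0"

end

theory Submission
  imports Defs
begin

theorem mainTheorem16:
  fixes q' e' qmax :: real
  assumes "q' > 0" and "0 < e'" and "e' < 1" and "qmax > 0"
  shows "\<not> (\<exists>q w'. 0 < q \<and> q \<le> qmax \<and> 0 \<le> w' \<and> w' \<le> pi / 2 \<and>
            (\<forall>e w. 0 \<le> e \<and> e \<le> 1 \<and> 0 \<le> w \<and> w \<le> pi \<longrightarrow> linked q e w q' e' w'))"
proof
  assume "\<exists>q w'. 0 < q \<and> q \<le> qmax \<and> 0 \<le> w' \<and> w' \<le> pi / 2 \<and>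
            (\<forall>e w. 0 \<le> e \<and> e \<le> 1 \<and> 0 \<le> w \<and> w \<le> pi \<longrightarrow> linked q e w q' e' w')"
  then obtain q w' where q: "0 < q" and w1: "0 \<le> w'" and w2: "w' \<le> pi/2"
    and L: "\<And>e w. 0 \<le> e \<Longrightarrow> e \<le> 1 \<Longrightarrow> 0 \<le> w \<Longrightarrow> w \<le> pi \<Longrightarrow> linked q e w q' e' w'"
    by blast
  define c where "c = cos w'"
  have c0: "0 \<le> c" unfolding c_def using w1 w2 by (intro cos_ge_zero) auto
  have c1: "c \<le> 1" unfolding c_def by simp
  have ec: "e' * c < 1" using c0 c1 assms by (smt (verit) mult_left_le)
  have p1: "0 < 1 + e' * c" using c0 assms by (smt (verit) mult_nonneg_nonneg)
  have m1: "0 < 1 - e' * c" using ec by simp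
  define A where "A = q' * (1 + e') / (1 + e' * c)"
  define B where "B = q' * (1 + e') / (1 - e' * c)"
  have AB: "A \<le> B" unfolding A_def B_def using assms p1 m1 c0
    by (intro divide_left_mono) (auto intro!: mult_pos_pos)
  have Bpos: "0 < B" unfolding B_def using assms m1 by simp
  have rp: "r_plus q' e' w' = ereal A" unfolding r_plus_def A_def c_def using p1 c_def by auto
  have rm: "r_minus q' e' w' = ereal B" unfolding r_minus_def B_def c_def using m1 c_def by auto
  have "linked q 0 0 q' e' w'" using L by simp
  moreover have "r_plus q 0 0 = ereal q" "r_minus q 0 0 = ereal q"
    by (simp_all add: r_plus_def r_minus_def)
  ultimately have "(A - q) * (B - q) < 0"
    by (simp add: linked_def d_plus_def d_minus_def rp rm)
  hence Aq: "A < q" using AB by (smt (verit) mult_nonneg_nonneg mult_nonpos_nonpos)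
  define R where "R = B / q"
  have R0: "0 < R" unfolding R_def using Bpos q by simp
  define e where "e = R / (R + 1)"
  have e0: "0 \<le> e" and e1: "e < 1" unfolding e_def using R0 by auto
  have den: "1 - e = 1 / (R + 1)" unfolding e_def using R0 by (simp add: field_simps)
  have num: "1 + e = (2*R+1) / (R + 1)" unfolding e_def using R0 by (simp add: field_simps)
  have val: "q * (1 + e) / (1 - e) = q * (2*R+1)" using R0 by (simp add: den num)
  have qR: "q * R = B" unfolding R_def using q by simp
  have "linked q e 0 q' e' w'" using L e0 e1 by simp
  moreover have "r_plus q e 0 = ereal q" unfolding r_plus_def using e0 e1
    by (simp add: field_simps)
  moreover have "r_minus q e 0 = ereal (q * (2*R+1))" unfolding r_minus_def using e1 val by simp
  ultimately have "(A - q) * (B - q * (2*R+1)) < 0"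
    by (simp add: linked_def d_plus_def d_minus_def rp rm)
  moreover have "B - q * (2*R+1) < 0" using qR q Bpos by (simp add: algebra_simps)
  ultimately show False using Aq by (smt (verit) mult_neg_neg)
qed

end
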